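(* Let $x_1,\dots,x_N\in\mathbb{R}^q$, let $\hat x_0\in\mathbb{R}^q$ be arbitrary, and define the median shift sequence by $$C_n=\{i: \|\hat x_n-x_i\|_1<1\},\qquad \hat x_{n+1}=\mathrm{Med}(\{x_i: i\in C_n\}),$$ where $\mathrm{Med}$ is the coordinatewise median defined in the context (and $\mathrm{Med}(\emptyset)=c$ for a fixed point $c\in\mathbb{R}^q$). Then $(\hat x_n)$ is stationary (constant from some index on), for any initialization $\hat x_0$.
   Context: $\|\cdot\|_1$ is the $L_1$ norm on $\mathbb{R}^q$. For a nonempty finite family of points of $\mathbb{R}^q$ (indexed by a subset of $\{1,\dots,N\}$), $\mathrm{Med}$ returns the point whose $k$-th coordinate is the median of the $k$-th coordinates of the family, where for an even number of values the median is taken as the average of the two middle values; thus $\mathrm{Med}$ depends only on the index set and is a minimizer of $x\mapsto\sum_i\|x-x_i\|_1$ over the family. *)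

theory Defs
  imports "HOL-Analysis.Analysis"
begin

definition l1_norm :: "real ^ 'q \<Rightarrow> real" where
  "l1_norm v = (\<Sum>k\<in>UNIV. \<bar>v $ k\<bar>)"

definition median_list :: "real list \<Rightarrow> real" where
  "median_list xs = (let ys = sort xs; n = length ys in
     if odd n then ys ! (n div 2) else (ys ! (n div 2 - 1) + ys ! (n div 2)) / 2)"

definition Med :: "real ^ 'q \<Rightarrow> (nat \<Rightarrow> real ^ 'q) \<Rightarrow> nat set \<Rightarrow> real ^ 'q" where
  "Med c x I = (if I = {} then c else
     (\<chi> k. median_list (map (\<lambda>i. x i $ k) (sorted_list_of_set I))))"

end

theory Submission
  imports Defs
begin

lemma pair_sum:
  fixes ys :: "real list" and m y :: real
  assumes s: "sorted ys" and n: "n = length ys"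
    and lo: "ys ! ((n-1) div 2) \<le> m" and hi: "m \<le> ys ! (n div 2)"
  shows "(\<Sum>j<n. \<bar>m - ys!j\<bar>) \<le> (\<Sum>j<n. \<bar>y - ys!j\<bar>)"
proof -
  have key: "\<bar>m - ys!j\<bar> + \<bar>m - ys!(n - Suc j)\<bar> \<le> \<bar>y - ys!j\<bar> + \<bar>y - ys!(n - Suc j)\<bar>"
    if j: "j < n" for j
  proof (cases "j \<le> (n-1) div 2")
    case True
    have i1: "(n-1) div 2 < length ys" using j n by linarith
    have a: "ys!j \<le> m" using sorted_nth_mono[OF s True i1] lo by linarith
    have i2: "n div 2 \<le> n - Suc j" "n - Suc j < length ys" using j n True by linarith+
    have b: "m \<le> ys!(n - Suc j)" using sorted_nth_mono[OF s i2] hi by linarith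
    show ?thesis using a b by linarith
  next
    case False
    have i1: "n div 2 \<le> j" "j < length ys" using j n False by linarith+
    have a: "m \<le> ys!j" using sorted_nth_mono[OF s i1] hi by linarith
    have i2: "n - Suc j \<le> (n-1) div 2" "(n-1) div 2 < length ys" using j n False by linarith+
    have b: "ys!(n - Suc j) \<le> m" using sorted_nth_mono[OF s i2] lo by linarith
    show ?thesis using a b by linarith
  qed
  have "(\<Sum>j<n. \<bar>m - ys!j\<bar> + \<bar>m - ys!(n - Suc j)\<bar>) \<le> (\<Sum>j<n. \<bar>y - ys!j\<bar> + \<bar>y - ys!(n - Suc j)\<bar>)"
    by (rule sum_mono) (use key in auto)
  moreover have "(\<Sum>j<n. \<bar>m - ys!(n - Suc j)\<bar>) = (\<Sum>j<n. \<bar>m - ys!j\<bar>)"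
    by (rule sum.nat_diff_reindex)
  moreover have "(\<Sum>j<n. \<bar>y - ys!(n - Suc j)\<bar>) = (\<Sum>j<n. \<bar>y - ys!j\<bar>)"
    by (rule sum.nat_diff_reindex)
  ultimately show ?thesis by (simp add: sum.distrib)
qed

lemma median_min:
  fixes xs :: "real list" and y :: real
  assumes ne: "xs \<noteq> []"
  shows "sum_list (map (\<lambda>a. \<bar>median_list xs - a\<bar>) xs) \<le> sum_list (map (\<lambda>a. \<bar>y - a\<bar>) xs)"
proof -
  define ys where "ys = sort xs"
  define n where "n = length ys"
  have s: "sorted ys" unfolding ys_def by simp
  have npos: "n > 0" using ne unfolding n_def ys_def by simp
  have med: "median_list xs = (if odd n then ys ! (n div 2) else (ys ! (n div 2 - 1) + ys ! (n div 2)) / 2)"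
    unfolding median_list_def ys_def n_def Let_def by simp
  have bounds: "ys ! ((n-1) div 2) \<le> median_list xs \<and> median_list xs \<le> ys ! (n div 2)"
  proof (cases "odd n")
    case True
    then have "(n-1) div 2 = n div 2" by (auto elim: oddE)
    then show ?thesis using med True by simp
  next
    case False
    then have e: "(n-1) div 2 = n div 2 - 1" "n div 2 - 1 \<le> n div 2" "n div 2 < n" using npos by auto
    have "ys ! (n div 2 - 1) \<le> ys ! (n div 2)" using sorted_nth_mono[OF s e(2)] e(3) n_def by simp
    then show ?thesis using med False e by simp
  qed
  have eq: "\<And>f::real\<Rightarrow>real. sum_list (map f xs) = (\<Sum>j<n. f (ys!j))"
  proof -
    fix f :: "real \<Rightarrow> real"
    have "sum_list (map f xs) = sum_list (map f ys)" unfolding ys_def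
      by (metis mset_map mset_sort sum_mset_sum_list)
    also have "\<dots> = (\<Sum>j<n. f (ys!j))" unfolding n_def
      by (simp add: sum_list_sum_nth atLeast0LessThan)
    finally show "sum_list (map f xs) = (\<Sum>j<n. f (ys!j))" .
  qed
  show ?thesis unfolding eq
    using pair_sum[OF s n_def] bounds by blast
qed

lemma Med_min:
  fixes x :: "nat \<Rightarrow> real ^ 'q" and y :: "real ^ 'q"
  assumes fin: "finite I"
  shows "(\<Sum>i\<in>I. l1_norm (Med c x I - x i)) \<le> (\<Sum>i\<in>I. l1_norm (y - x i))"
proof (cases "I = {}")
  case True
  then show ?thesis by simp
next
  case False
  define L where "L = sorted_list_of_set I"
  have dL: "distinct L" and sL: "set L = I" and neL: "L \<noteq> []"
    using fin False unfolding L_def by auto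
  have Mk: "Med c x I $ k = median_list (map (\<lambda>i. x i $ k) L)" for k
    using False unfolding Med_def L_def by simp
  have coord: "(\<Sum>i\<in>I. \<bar>Med c x I $ k - x i $ k\<bar>) \<le> (\<Sum>i\<in>I. \<bar>y $ k - x i $ k\<bar>)" for k
  proof -
    have "(\<Sum>i\<in>I. \<bar>Med c x I $ k - x i $ k\<bar>)
        = sum_list (map (\<lambda>a. \<bar>median_list (map (\<lambda>i. x i $ k) L) - a\<bar>) (map (\<lambda>i. x i $ k) L))"
      by (simp add: Mk o_def sum_list_distinct_conv_sum_set[OF dL] sL)
    also have "\<dots> \<le> sum_list (map (\<lambda>a. \<bar>y $ k - a\<bar>) (map (\<lambda>i. x i $ k) L))"
      by (rule median_min) (simp add: neL)
    also have "\<dots> = (\<Sum>i\<in>I. \<bar>y $ k - x i $ k\<bar>)"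
      by (simp add: o_def sum_list_distinct_conv_sum_set[OF dL] sL)
    finally show ?thesis .
  qed
  have "(\<Sum>i\<in>I. l1_norm (Med c x I - x i)) = (\<Sum>k\<in>UNIV. \<Sum>i\<in>I. \<bar>Med c x I $ k - x i $ k\<bar>)"
    unfolding l1_norm_def by (simp add: sum.swap[of _ I])
  also have "\<dots> \<le> (\<Sum>k\<in>UNIV. \<Sum>i\<in>I. \<bar>y $ k - x i $ k\<bar>)"
    by (rule sum_mono) (rule coord)
  also have "\<dots> = (\<Sum>i\<in>I. l1_norm (y - x i))"
    unfolding l1_norm_def by (simp add: sum.swap[of _ I])
  finally show ?thesis .
qed

theorem proposition4:
  fixes N :: nat and x :: "nat \<Rightarrow> real ^ 'q" and c :: "real ^ 'q"
    and xhat :: "nat \<Rightarrow> real ^ 'q"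
  assumes step: "\<And>n. xhat (Suc n) =
      Med c x {i \<in> {1..N}. l1_norm (xhat n - x i) < 1}"
  shows "\<exists>m. \<forall>n\<ge>m. xhat n = xhat m"
proof -
  define C where "C n = {i \<in> {1..N}. l1_norm (xhat n - x i) < 1}" for n
  define Lf where "Lf v = (\<Sum>i\<in>{1..N}. min (l1_norm (v - x i)) 1)" for v
  have stepC: "xhat (Suc n) = Med c x (C n)" for n using step unfolding C_def by simp
  have finC: "finite (C n)" for n unfolding C_def by simp
  have CsubN: "C n \<subseteq> {1..N}" for n unfolding C_def by auto
  have split: "Lf v = (\<Sum>i\<in>C n. min (l1_norm (v - x i)) 1) + (\<Sum>i\<in>{1..N} - C n. min (l1_norm (v - x i)) 1)" for v n
    unfolding Lf_def using sum.subset_diff[OF CsubN[of n], of "\<lambda>i. min (l1_norm (v - x i)) 1"] by simp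
  have Lcur: "Lf (xhat n) = (\<Sum>i\<in>C n. l1_norm (xhat n - x i)) + real (card ({1..N} - C n))" for n
  proof -
    have "(\<Sum>i\<in>C n. min (l1_norm (xhat n - x i)) 1) = (\<Sum>i\<in>C n. l1_norm (xhat n - x i))"
      by (rule sum.cong) (auto simp: C_def)
    moreover have "(\<Sum>i\<in>{1..N} - C n. min (l1_norm (xhat n - x i)) 1) = (\<Sum>i\<in>{1..N} - C n. 1)"
      by (rule sum.cong) (auto simp: C_def)
    ultimately show ?thesis using split[of "xhat n" n] by simp
  qed
  have medle: "(\<Sum>i\<in>C n. l1_norm (xhat (Suc n) - x i)) \<le> (\<Sum>i\<in>C n. l1_norm (xhat n - x i))" for n
    unfolding stepC by (rule Med_min[OF finC])
  have Lnext: "Lf (xhat (Suc n)) \<le> (\<Sum>i\<in>C n. l1_norm (xhat (Suc n) - x i)) + (\<Sum>i\<in>{1..N} - C n. min (l1_norm (xhat (Suc n) - x i)) 1)" for n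
  proof -
    have "(\<Sum>i\<in>C n. min (l1_norm (xhat (Suc n) - x i)) 1) \<le> (\<Sum>i\<in>C n. l1_norm (xhat (Suc n) - x i))"
      by (rule sum_mono) simp
    then show ?thesis using split[of "xhat (Suc n)" n] by linarith
  qed
  have rest_le: "(\<Sum>i\<in>{1..N} - C n. min (l1_norm (xhat (Suc n) - x i)) 1) \<le> real (card ({1..N} - C n))" for n
  proof -
    have "(\<Sum>i\<in>{1..N} - C n. min (l1_norm (xhat (Suc n) - x i)) 1) \<le> (\<Sum>i\<in>{1..N} - C n. 1)"
      by (rule sum_mono) simp
    then show ?thesis by simp
  qed
  have mono: "Lf (xhat (Suc n)) \<le> Lf (xhat n)" for n
    using Lnext[of n] rest_le[of n] medle[of n] Lcur[of n] by linarith
  have eqsub: "C (Suc n) \<subseteq> C n" if eq: "Lf (xhat (Suc n)) = Lf (xhat n)" for n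
  proof
    fix i assume i: "i \<in> C (Suc n)"
    show "i \<in> C n"
    proof (rule ccontr)
      assume ni: "i \<notin> C n"
      have iN: "i \<in> {1..N} - C n" using i ni CsubN[of "Suc n"] by blast
      have lt: "l1_norm (xhat (Suc n) - x i) < 1" using i unfolding C_def by simp
      have "(\<Sum>i\<in>{1..N} - C n. min (l1_norm (xhat (Suc n) - x i)) 1) < (\<Sum>i\<in>{1..N} - C n. 1)"
      proof (rule sum_strict_mono_ex1)
        show "\<exists>a\<in>{1..N} - C n. min (l1_norm (xhat (Suc n) - x a)) 1 < 1"
          using iN lt by (intro bexI[of _ i]) auto
      qed auto
      then have "(\<Sum>i\<in>{1..N} - C n. min (l1_norm (xhat (Suc n) - x i)) 1) < real (card ({1..N} - C n))"
        by simp
      then show False using Lnext[of n] medle[of n] Lcur[of n] eq by linarith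
    qed
  qed
  have monok: "Lf (xhat (m + k)) \<le> Lf (xhat m)" for m k
  proof (induction k)
    case 0 then show ?case by simp
  next
    case (Suc k) then show ?case using mono[of "m + k"] by simp
  qed
  define A where "A = {Lf (xhat n) | n. n \<ge> 1}"
  have Asub: "A \<subseteq> (\<lambda>S. Lf (Med c x S)) ` Pow {1..N}"
    unfolding A_def
  proof clarify
    fix n :: nat assume "1 \<le> n"
    then obtain k where k: "n = Suc k" by (cases n) auto
    show "Lf (xhat n) \<in> (\<lambda>S. Lf (Med c x S)) ` Pow {1..N}"
      using k stepC CsubN by auto
  qed
  have finA: "finite A" by (rule finite_subset[OF Asub]) simp
  have neA: "Lf (xhat 1) \<in> A" unfolding A_def by auto
  obtain m where m1: "m \<ge> 1" and mmin: "Lf (xhat m) = Min A"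
  proof -
    have "Min A \<in> A" using finA neA by (intro Min_in) auto
    then show ?thesis using that unfolding A_def by auto
  qed
  have Lconst: "Lf (xhat (Suc n)) = Lf (xhat n)" if "n \<ge> m" for n
  proof -
    have "Lf (xhat (Suc n)) \<in> A" unfolding A_def by auto
    then have "Lf (xhat m) \<le> Lf (xhat (Suc n))" using mmin finA by simp
    moreover have "Lf (xhat n) \<le> Lf (xhat m)" using monok[of m "n - m"] that by simp
    ultimately show ?thesis using mono[of n] by linarith
  qed
  have Cdec: "C (Suc n) \<subseteq> C n" if "n \<ge> m" for n using eqsub Lconst that by blast
  obtain m' where m': "m' \<ge> m" and cmin: "\<And>n. n \<ge> m \<Longrightarrow> card (C m') \<le> card (C n)"
    using ex_has_least_nat[of "\<lambda>n. n \<ge> m" m "\<lambda>n. card (C n)"] by auto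
  have Csub: "C (m' + k) \<subseteq> C m'" for k
  proof (induction k)
    case 0 then show ?case by simp
  next
    case (Suc k) then show ?case using Cdec[of "m' + k"] m' by auto
  qed
  have Ceq: "C n = C m'" if "n \<ge> m'" for n
  proof -
    have s: "C n \<subseteq> C m'" using Csub[of "n - m'"] that by simp
    have "card (C m') \<le> card (C n)" using cmin that m' by simp
    moreover have "card (C n) \<le> card (C m')" by (rule card_mono[OF finC s])
    ultimately show ?thesis using card_subset_eq[OF finC s] by linarith
  qed
  show ?thesis
  proof (intro exI allI impI)
    fix n assume n: "n \<ge> Suc m'"
    then obtain k where k: "n = Suc k" and km: "k \<ge> m'" by (cases n) auto
    show "xhat n = xhat (Suc m')" using k stepC Ceq[OF km] by simp
  qed
qed

end
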